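(* Let $d\in\mathbb{N}$, $\beta\in(0,1]$, $r>0$ and $2\le p\le\infty$. There is a constant $c>0$ (depending on $d,\beta,r,p$) such that for all $m\in\mathbb{N}$, $$\varrho_m^o(\mathbf{A}^r_\beta(\mathcal{T}^d),L_p)\ge c\,m^{1-1/p-1/\beta-r/d}.$$
   Context: $\mathbb{T}^d=[0,2\pi)^d$ with normalized Lebesgue measure $\mu$, $L_p=L_p(\mathbb{T}^d,\mu)$ (sup norm for $p=\infty$). $\mathcal{T}^d=\{e^{i(\mathbf k,\mathbf x)}\}_{\mathbf k\in\mathbb{Z}^d}$ is the trigonometric system. Class $\mathbf{A}^r_\beta(\mathcal{T}^d)$: all $f=\sum_{\mathbf k\in\mathbb{Z}^d}a_{\mathbf k}e^{i(\mathbf k,\mathbf x)}$ with $\sum_{\mathbf k}|a_{\mathbf k}|<\infty$ and $\big(\sum_{[2^{j-1}]\le\|\mathbf k\|_\infty<2^j}|a_{\mathbf k}|^\beta\big)^{1/\beta}\le2^{-rj}$, $j=0,1,\dots$ ($[x]$ the integer part). $\varrho_m^o(\mathbf F,L_p)=\inf_\xi\inf_{\mathcal M}\sup_{f\in\mathbf F}\|f-\mathcal M(f(\xi^1),\dots,f(\xi^m))\|_p$, infima over all $m$-point sets $\xi\subset\mathbb{T}^d$ and all mappings $\mathcal M:\mathbb{C}^m\to L_p$. *)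

theory Defs
  imports "HOL-Analysis.Analysis"
begin

text \<open>The torus [0,2pi)^d, with dimension d = CARD('n).\<close>
definition torus :: "(real ^ 'n) set" where
  "torus = {x. \<forall>i. 0 \<le> x $ i \<and> x $ i < 2 * pi}"

definition trig :: "int ^ 'n \<Rightarrow> real ^ 'n \<Rightarrow> complex" where
  "trig k x = cis (\<Sum>i\<in>UNIV. real_of_int (k $ i) * x $ i)"

definition supnorm_int :: "int ^ 'n \<Rightarrow> int" where
  "supnorm_int k = Max (range (\<lambda>i. \<bar>k $ i\<bar>))"

definition dyadic_block :: "nat \<Rightarrow> (int ^ 'n) set" where
  "dyadic_block j = {k. \<lfloor>(2::real) powr (real j - 1)\<rfloor> \<le> supnorm_int k \<and> supnorm_int k < 2 ^ j}"

definition A_class :: "real \<Rightarrow> real \<Rightarrow> (real ^ 'n \<Rightarrow> complex) set" where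
  "A_class r \<beta> = {f. \<exists>a :: int ^ 'n \<Rightarrow> complex.
      (\<lambda>k. norm (a k)) summable_on UNIV \<and>
      f = (\<lambda>x. \<Sum>\<^sub>\<infinity>k. a k * trig k x) \<and>
      (\<forall>j::nat. (\<Sum>k\<in>dyadic_block j. norm (a k) powr \<beta>) powr (1 / \<beta>) \<le> 2 powr (- r * real j))}"

definition Lp_norm :: "ennreal \<Rightarrow> (real ^ 'n \<Rightarrow> complex) \<Rightarrow> ennreal" where
  "Lp_norm p g =
    (if p = \<infinity> then (SUP x\<in>torus. ennreal (norm (g x)))
     else (let I = (\<integral>\<^sup>+ x. ennreal (norm (g x) powr enn2real p) * indicator torus x \<partial>lborel)
                   / ennreal ((2 * pi) ^ CARD('n))
           in if I = \<infinity> then \<infinity> else ennreal (enn2real I powr (1 / enn2real p))))"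

definition rho_o :: "nat \<Rightarrow> (real ^ 'n \<Rightarrow> complex) set \<Rightarrow> ennreal \<Rightarrow> ennreal" where
  "rho_o m F p =
    (INF \<xi>\<in>{\<xi> :: (real ^ 'n) list. length \<xi> = m \<and> set \<xi> \<subseteq> torus}.
      INF M\<in>{M :: complex list \<Rightarrow> real ^ 'n \<Rightarrow> complex. \<forall>y. M y \<in> borel_measurable lborel}.
        SUP f\<in>F. Lp_norm p (\<lambda>x. f x - M (map f \<xi>) x))"

definition inv_exp :: "ennreal \<Rightarrow> real" where
  "inv_exp p = (if p = \<infinity> then 0 else 1 / enn2real p)"

end

theory Submission
  imports Defs
begin

definition vbox :: "'a set \<Rightarrow> ('a ^ 'n) set" where
  "vbox S = {v. \<forall>i. v $ i \<in> S}"

lemma vbox_eq_image: "vbox S = vec_lambda ` (PiE UNIV (\<lambda>_. S))"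
proof
  show "vbox S \<subseteq> vec_lambda ` (PiE UNIV (\<lambda>_. S))"
  proof
    fix v :: "'a^'n" assume "v \<in> vbox S"
    then have "vec_nth v \<in> PiE UNIV (\<lambda>_. S)" by (auto simp: vbox_def)
    moreover have "v = vec_lambda (vec_nth v)" by simp
    ultimately show "v \<in> vec_lambda ` (PiE UNIV (\<lambda>_. S))" by blast
  qed
qed (auto simp: vbox_def)

lemma inj_on_vec_lambda: "inj_on (vec_lambda :: ('n::finite \<Rightarrow> 'a) \<Rightarrow> 'a^'n) (PiE UNIV (\<lambda>_. S))"
  by (auto simp: inj_on_def vec_eq_iff PiE_def extensional_def fun_eq_iff)

lemma finite_vbox: "finite S \<Longrightarrow> finite (vbox S :: ('a^'n::finite) set)"
  unfolding vbox_eq_image by (auto intro!: finite_PiE)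

lemma sum_vbox:
  fixes h :: "'n::finite \<Rightarrow> 'a \<Rightarrow> 'c::comm_semiring_1"
  assumes "finite S"
  shows "(\<Sum>v\<in>(vbox S :: ('a^'n) set). \<Prod>i\<in>UNIV. h i (v $ i)) = (\<Prod>i\<in>UNIV. \<Sum>t\<in>S. h i t)"
proof -
  have "(\<Prod>i\<in>UNIV. \<Sum>t\<in>S. h i t) = (\<Sum>g\<in>PiE UNIV (\<lambda>_. S). \<Prod>i\<in>UNIV. h i (g i))"
    using assms by (intro prod_sum_PiE) auto
  also have "\<dots> = (\<Sum>v\<in>(vbox S :: ('a^'n) set). \<Prod>i\<in>UNIV. h i (v $ i))"
    unfolding vbox_eq_image by (subst sum.reindex[OF inj_on_vec_lambda]) simp
  finally show ?thesis by simp
qed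

lemma card_vbox:
  assumes "finite S"
  shows "card (vbox S :: ('a^'n::finite) set) = card S ^ CARD('n)"
  using sum_vbox[OF assms, where h="\<lambda>_ _. (1::nat)"] by simp

lemma trig_prod: "trig k x = (\<Prod>i\<in>UNIV. cis (real_of_int (k $ i) * x $ i))"
  by (simp add: trig_def cis_conv_exp exp_sum[symmetric] sum_distrib_left)

lemma trig_add: "trig (k + l) x = trig k x * trig l x"
proof -
  have "(\<Sum>i\<in>UNIV. real_of_int ((k + l) $ i) * x $ i) = (\<Sum>i\<in>UNIV. real_of_int (k $ i) * x $ i) + (\<Sum>i\<in>UNIV. real_of_int (l $ i) * x $ i)"
    by (simp add: sum.distrib[symmetric] algebra_simps)
  then show ?thesis by (simp add: trig_def cis_mult)
qed

lemma trig_zero[simp]: "trig 0 x = 1"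
  by (simp add: trig_def)

lemma norm_trig[simp]: "norm (trig k x) = 1"
  by (simp add: trig_def)

lemma cnj_trig: "cnj (trig k x) = trig (- k) x"
  by (simp add: trig_def cis_cnj sum_negf)

lemma cis_sum_unity:
  fixes v :: int and M :: nat
  assumes "M > 0" "\<bar>v\<bar> < int M"
  shows "(\<Sum>t<M. cis (real_of_int v * (2 * pi * real t / real M))) = (if v = 0 then of_nat M else 0)"
proof (cases "v = 0")
  case True then show ?thesis by simp
next
  case False
  define z where "z = cis (2 * pi * real_of_int v / real M)"
  have zt: "cis (real_of_int v * (2 * pi * real t / real M)) = z ^ t" for t
  proof -
    have "z ^ t = cis (real t * (2 * pi * real_of_int v / real M))" unfolding z_def by (rule Complex.DeMoivre)
    also have "real t * (2 * pi * real_of_int v / real M) = real_of_int v * (2 * pi * real t / real M)"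
      by (simp add: field_simps)
    finally show ?thesis by simp
  qed
  have zM: "z ^ M = 1"
    using assms by (simp add: z_def Complex.DeMoivre)
  have "z \<noteq> 1"
  proof
    assume "z = 1"
    then have "exp (\<i> * complex_of_real (2 * pi * real_of_int v / real M)) = 1"
      by (simp add: z_def cis_conv_exp)
    then obtain n :: int where n: "2 * pi * real_of_int v / real M = of_int (2 * n) * pi"
      by (auto simp: exp_eq_1)
    then have "real_of_int v = real_of_int n * real M"
      using assms(1) by (simp add: field_simps)
    then have "v = n * int M" by (metis of_int_eq_iff of_int_mult of_int_of_nat_eq)
    with False assms(2) show False
      by (metis abs_mult less_le_not_le mult_le_cancel_right1 of_nat_0_le_iff abs_of_nat zero_less_abs_iff mult_cancel_right1 abs_ge_zero abs_mult_pos mult_eq_0_iff int_one_le_iff_zero_less mult.commute order_trans)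
  qed
  have "(\<Sum>t<M. cis (real_of_int v * (2 * pi * real t / real M))) = (\<Sum>t<M. z ^ t)"
    by (rule sum.cong) (simp_all only: zt)
  also have "\<dots> = 0" using \<open>z \<noteq> 1\<close> zM by (simp add: sum_gp_strict)
  finally show ?thesis using False by simp
qed

definition grid :: "nat \<Rightarrow> (real ^ 'n) set" where
  "grid M = vbox ((\<lambda>t. 2 * pi * real t / real M) ` {..<M})"

lemma finite_grid: "finite (grid M :: (real^'n::finite) set)"
  unfolding grid_def by (intro finite_vbox) auto

lemma grid_sum:
  fixes v :: "int ^ 'n::finite"
  assumes "M > 0" "\<And>i. \<bar>v $ i\<bar> < int M"
  shows "(\<Sum>x\<in>(grid M :: (real^'n) set). trig v x) = (if v = 0 then of_nat M ^ CARD('n) else 0)"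
proof -
  have inj: "inj_on (\<lambda>t. 2 * pi * real t / real M) {..<M}"
    using assms(1) by (auto simp: inj_on_def)
  have "(\<Sum>x\<in>(grid M :: (real^'n) set). trig v x)
      = (\<Sum>x\<in>(grid M :: (real^'n) set). \<Prod>i\<in>UNIV. cis (real_of_int (v $ i) * x $ i))"
    by (simp add: trig_prod)
  also have "\<dots> = (\<Prod>i\<in>UNIV. \<Sum>t\<in>(\<lambda>t. 2 * pi * real t / real M) ` {..<M}. cis (real_of_int (v $ i) * t))"
    unfolding grid_def by (rule sum_vbox) auto
  also have "\<dots> = (\<Prod>i\<in>UNIV. \<Sum>t<M. cis (real_of_int (v $ i) * (2 * pi * real t / real M)))"
    by (simp add: sum.reindex[OF inj])
  also have "\<dots> = (\<Prod>i\<in>UNIV. (if v $ i = 0 then of_nat M else 0))"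
    by (rule prod.cong[OF refl], rule cis_sum_unity) (use assms in auto)
  also have "\<dots> = (if v = 0 then of_nat M ^ CARD('n) else 0)"
  proof (cases "v = 0")
    case True then show ?thesis by simp
  next
    case False
    then obtain i where "v $ i \<noteq> 0" by (auto simp: vec_eq_iff)
    then show ?thesis using False by (auto simp: prod_zero_iff)
  qed
  finally show ?thesis .
qed

lemma grid_subset_torus:
  assumes "M > 0"
  shows "grid M \<subseteq> torus"
proof
  fix x :: "real^'n" assume "x \<in> grid M"
  then have "\<forall>i. \<exists>t<M. x $ i = 2 * pi * real t / real M" by (auto simp: grid_def vbox_def)
  moreover have "0 \<le> 2 * pi * real t / real M \<and> 2 * pi * real t / real M < 2 * pi" if "t < M" for t
    using that assms by (auto simp: field_simps)
  ultimately have "\<forall>i. 0 \<le> x $ i \<and> x $ i < 2 * pi" by metis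
  then show "x \<in> torus" unfolding torus_def by simp
qed

lemma grid_nonempty: "M > 0 \<Longrightarrow> grid M \<noteq> {}"
proof -
  assume "M > 0"
  then have "(0::real) \<in> (\<lambda>t. 2 * pi * real t / real M) ` {..<M}" by (auto intro!: image_eqI[of 0 _ 0])
  then have "(\<chi> i. 0) \<in> (grid M :: (real^'n) set)" unfolding grid_def vbox_def by simp
  then show ?thesis by blast
qed

lemma parseval_grid:
  fixes c :: "int ^ 'n::finite \<Rightarrow> complex" and L :: int
  assumes "finite S" "S \<subseteq> vbox {0..L}" "L < int M" "0 \<le> L"
  shows "(\<Sum>x\<in>(grid M :: (real^'n) set). (norm (\<Sum>k\<in>S. c k * trig k x))^2)
       = real M ^ CARD('n) * (\<Sum>k\<in>S. (norm (c k))^2)"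
proof -
  have M0: "M > 0" using assms(3,4) by simp
  { fix k l assume k: "k \<in> S" and l: "l \<in> S"
    have "\<bar>k $ i - l $ i\<bar> < int M" for i
    proof -
      have "k $ i \<in> {0..L}" "l $ i \<in> {0..L}" using assms(2) k l by (auto simp: vbox_def)
      then show ?thesis using assms(3) by simp arith
    qed }
  note diff = this
  have "complex_of_real (\<Sum>x\<in>(grid M :: (real^'n) set). (norm (\<Sum>k\<in>S. c k * trig k x))^2)
      = (\<Sum>x\<in>(grid M :: (real^'n) set). (\<Sum>k\<in>S. c k * trig k x) * cnj (\<Sum>k\<in>S. c k * trig k x))"
    unfolding of_real_sum complex_norm_square ..
  also have "\<dots> = (\<Sum>x\<in>(grid M :: (real^'n) set). \<Sum>k\<in>S. \<Sum>l\<in>S. c k * cnj (c l) * trig (k - l) x)"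
  proof (rule sum.cong[OF refl])
    fix x :: "real^'n"
    have "(\<Sum>k\<in>S. c k * trig k x) * cnj (\<Sum>k\<in>S. c k * trig k x)
        = (\<Sum>k\<in>S. c k * trig k x) * (\<Sum>l\<in>S. cnj (c l) * trig (- l) x)"
      by (simp add: cnj_sum cnj_trig)
    also have "\<dots> = (\<Sum>k\<in>S. \<Sum>l\<in>S. c k * cnj (c l) * trig (k - l) x)"
      unfolding sum_product
    proof (intro sum.cong refl)
      fix k l
      have "trig (k - l) x = trig k x * trig (- l) x" using trig_add[of k "-l" x] by simp
      then show "c k * trig k x * (cnj (c l) * trig (- l) x) = c k * cnj (c l) * trig (k - l) x"
        by (simp add: mult_ac)
    qed
    finally show "(\<Sum>k\<in>S. c k * trig k x) * cnj (\<Sum>k\<in>S. c k * trig k x) = \<dots>" .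
  qed
  also have "\<dots> = (\<Sum>k\<in>S. \<Sum>l\<in>S. c k * cnj (c l) * (\<Sum>x\<in>(grid M :: (real^'n) set). trig (k - l) x))"
    by (simp only: sum_distrib_left, subst sum.swap, rule sum.cong[OF refl], subst sum.swap, rule refl)
  also have "\<dots> = (\<Sum>k\<in>S. \<Sum>l\<in>S. c k * cnj (c l) * (if k = l then of_nat M ^ CARD('n) else 0))"
    by (intro sum.cong refl, subst grid_sum[OF M0]) (use diff in auto)
  also have "\<dots> = (\<Sum>k\<in>S. c k * cnj (c k) * of_nat M ^ CARD('n))"
    using assms(1) by (simp add: if_distrib sum.delta cong: if_cong)
  also have "\<dots> = complex_of_real (real M ^ CARD('n) * (\<Sum>k\<in>S. (norm (c k))^2))"
    by (simp add: complex_norm_square[symmetric] sum_distrib_left mult_ac)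
  finally show ?thesis by (simp only: of_real_eq_iff)
qed

lemma exists_kernel:
  fixes Ls :: "('a \<Rightarrow> complex) list"
  assumes "finite S" "length Ls < card S"
  shows "\<exists>c. (\<forall>k. k \<notin> S \<longrightarrow> c k = 0) \<and> (\<exists>k\<in>S. c k \<noteq> 0) \<and> (\<forall>L\<in>set Ls. (\<Sum>k\<in>S. c k * L k) = 0)"
proof -
  define P where "P n \<longleftrightarrow> (\<forall>(Ls :: ('a \<Rightarrow> complex) list) S. n = length Ls \<longrightarrow> finite S \<longrightarrow> length Ls < card S \<longrightarrow>
     (\<exists>c. (\<forall>k. k \<notin> S \<longrightarrow> c k = 0) \<and> (\<exists>k\<in>S. c k \<noteq> 0) \<and> (\<forall>L\<in>set Ls. (\<Sum>k\<in>S. c k * L k) = 0)))" for n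
  have Pn: "P n" for n
  proof (induction n)
    case 0
    show ?case unfolding P_def
    proof (intro allI impI)
      fix Ls :: "('a \<Rightarrow> complex) list" and S :: "'a set"
      assume "0 = length Ls" "finite S" "length Ls < card S"
      then obtain s where s: "s \<in> S" by (metis card.empty equals0I less_irrefl)
      show "\<exists>c. (\<forall>k. k \<notin> S \<longrightarrow> c k = 0) \<and> (\<exists>k\<in>S. c k \<noteq> 0) \<and> (\<forall>L\<in>set Ls. (\<Sum>k\<in>S. c k * L k) = 0)"
        by (rule exI[of _ "\<lambda>k. if k = s then 1 else 0"]) (use s \<open>0 = length Ls\<close> in auto)
    qed
  next
    case (Suc n)
    show ?case unfolding P_def
    proof (intro allI impI)
  fix Ls0 :: "('a \<Rightarrow> complex) list" and S :: "'a set"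
  assume len0: "Suc n = length Ls0" and prems: "finite S" "length Ls0 < card S"
  then obtain L Ls where Ls0: "Ls0 = L # Ls" by (cases Ls0) auto
  note IH = Suc.IH[unfolded P_def, rule_format]
  have lenLs: "n = length Ls" using len0 Ls0 by simp
  show "\<exists>c. (\<forall>k. k \<notin> S \<longrightarrow> c k = 0) \<and> (\<exists>k\<in>S. c k \<noteq> 0) \<and> (\<forall>L\<in>set Ls0. (\<Sum>k\<in>S. c k * L k) = 0)"
  proof (cases "\<forall>k\<in>S. L k = 0")
    case True
    from IH[OF lenLs prems(1)] prems Ls0 obtain c where
      c: "\<forall>k. k \<notin> S \<longrightarrow> c k = 0" "\<exists>k\<in>S. c k \<noteq> 0" "\<forall>L\<in>set Ls. (\<Sum>k\<in>S. c k * L k) = 0"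
      by auto
    show ?thesis using c True Ls0 by (intro exI[of _ c]) auto
  next
    case False
    then obtain s0 where s0: "s0 \<in> S" "L s0 \<noteq> 0" by auto
    define S' where "S' = S - {s0}"
    have fin': "finite S'" using prems by (simp add: S'_def)
    have card': "length (map (\<lambda>L'. \<lambda>k. L' k - L' s0 * L k / L s0) Ls) < card S'"
      using prems s0 Ls0 by (simp add: S'_def)
    from IH[OF _ fin' card', simplified, OF lenLs] obtain c' where
      c': "\<forall>k. k \<notin> S' \<longrightarrow> c' k = 0" "\<exists>k\<in>S'. c' k \<noteq> 0"
          "\<forall>L'\<in>set Ls. (\<Sum>k\<in>S'. c' k * (L' k - L' s0 * L k / L s0)) = 0"
      by auto
    define c where "c k = (if k = s0 then - (\<Sum>k\<in>S'. c' k * L k) / L s0 else c' k)" for k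
    have cS': "c k = c' k" if "k \<in> S'" for k using that by (simp add: c_def S'_def)
    have sumS: "(\<Sum>k\<in>S. c k * F k) = c s0 * F s0 + (\<Sum>k\<in>S'. c' k * F k)" for F
    proof -
      have "(\<Sum>k\<in>S. c k * F k) = c s0 * F s0 + (\<Sum>k\<in>S'. c k * F k)"
        unfolding S'_def by (rule sum.remove[OF prems(1) s0(1)])
      also have "(\<Sum>k\<in>S'. c k * F k) = (\<Sum>k\<in>S'. c' k * F k)"
        by (rule sum.cong[OF refl]) (simp add: cS')
      finally show ?thesis .
    qed
    have "(\<forall>k. k \<notin> S \<longrightarrow> c k = 0)"
      using c'(1) s0(1) by (auto simp: c_def S'_def)
    moreover have "\<exists>k\<in>S. c k \<noteq> 0"
    proof -
      from c'(2) obtain k where k: "k \<in> S'" "c' k \<noteq> 0" by blast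
      then show ?thesis using cS'[OF k(1)] by (intro bexI[of _ k]) (auto simp: S'_def)
    qed
    moreover have "(\<Sum>k\<in>S. c k * L k) = 0"
      using s0 unfolding sumS by (simp add: c_def)
    moreover have "(\<Sum>k\<in>S. c k * L' k) = 0" if "L' \<in> set Ls" for L'
    proof -
      have "0 = (\<Sum>k\<in>S'. c' k * (L' k - L' s0 * L k / L s0))" using c'(3) that by auto
      also have "\<dots> = (\<Sum>k\<in>S'. c' k * L' k - L' s0 / L s0 * (c' k * L k))"
        by (rule sum.cong[OF refl]) (simp add: algebra_simps)
      also have "\<dots> = (\<Sum>k\<in>S'. c' k * L' k) - L' s0 / L s0 * (\<Sum>k\<in>S'. c' k * L k)"
        by (simp add: sum_subtractf sum_distrib_left)
      also have "\<dots> = c s0 * L' s0 + (\<Sum>k\<in>S'. c' k * L' k)"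
        by (simp add: c_def algebra_simps)
      also have "\<dots> = (\<Sum>k\<in>S. c k * L' k)"
        by (rule sumS[symmetric])
      finally show ?thesis by simp
    qed
    ultimately show ?thesis using Ls0 by (intro exI[of _ c]) auto
  qed
  qed
  qed
  show ?thesis by (rule Pn[of "length Ls", unfolded P_def, rule_format, OF refl assms])
qed

lemma cis_lipschitz: "norm (cis a - cis b) \<le> \<bar>a - b\<bar>"
proof -
  have "(norm (cis a - cis b))^2 = (cos a - cos b)^2 + (sin a - sin b)^2"
    by (simp add: cmod_power2)
  also have "\<dots> = 2 - 2 * cos (a - b)"
    by (simp add: cos_diff power2_diff sin_squared_eq algebra_simps)
  also have "\<dots> = 4 * (sin ((a - b) / 2))^2"
  proof -
    have e: "2 * ((a - b) / 2) = a - b" by simp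
    have "cos (a - b) = 1 - 2 * (sin ((a - b) / 2))^2"
      using cos_double_sin[of "(a - b) / 2"] unfolding e .
    then show ?thesis by simp
  qed
  also have "\<dots> \<le> 4 * (\<bar>(a - b) / 2\<bar>)^2"
  proof -
    have "(sin ((a - b) / 2))^2 \<le> (\<bar>(a - b) / 2\<bar>)^2"
      by (metis abs_ge_zero abs_sin_x_le_abs_x power2_abs power_mono)
    then show ?thesis by simp
  qed
  also have "\<dots> = (\<bar>a - b\<bar>)^2" by (simp add: power2_eq_square)
  finally show ?thesis by (rule power2_le_imp_le) simp
qed

lemma continuous_on_trig: "continuous_on UNIV (trig k)"
  unfolding trig_def by (intro continuous_intros)

lemma torus_measurable: "torus \<in> sets lborel"
proof -
  have "torus = (\<Inter>i. {x::real^'n. 0 \<le> x $ i} \<inter> {x. x $ i < 2 * pi})"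
    by (auto simp: torus_def)
  also have "\<dots> \<in> sets lborel"
    by (intro sets.countable_INT' sets.Int) (auto intro: borel_closed borel_open closed_Collect_le open_Collect_less continuous_intros)
  finally show ?thesis .
qed

lemma infsum_finite_support:
  fixes a :: "'a \<Rightarrow> 'b::{comm_monoid_add, t2_space, mult_zero}"
  assumes "finite S" "\<And>k. k \<notin> S \<Longrightarrow> a k = 0"
  shows "(\<Sum>\<^sub>\<infinity>k. a k * t k) = (\<Sum>k\<in>S. a k * t k)"
proof -
  have "(\<Sum>\<^sub>\<infinity>k. a k * t k) = (\<Sum>\<^sub>\<infinity>k\<in>S. a k * t k)"
    by (rule infsum_cong_neutral) (use assms in auto)
  also have "\<dots> = (\<Sum>k\<in>S. a k * t k)" using assms(1) by simp
  finally show ?thesis .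
qed

lemma supnorm_int_le:
  assumes "\<And>i. \<bar>k $ i\<bar> \<le> L"
  shows "supnorm_int k \<le> L"
  unfolding supnorm_int_def using assms by (subst Max_le_iff) auto

lemma abs_le_supnorm_int: "\<bar>k $ i\<bar> \<le> supnorm_int k"
  unfolding supnorm_int_def by (rule Max_ge) auto

lemma finite_dyadic_block: "finite (dyadic_block j :: (int^'n::finite) set)"
proof -
  have "dyadic_block j \<subseteq> (vbox {-(2^j)..2^j} :: (int^'n) set)"
  proof
    fix k :: "int^'n" assume "k \<in> dyadic_block j"
    then have "supnorm_int k < 2 ^ j" by (simp add: dyadic_block_def)
    then have a: "\<bar>k $ i\<bar> \<le> 2 ^ j" for i using abs_le_supnorm_int[of k i] by simp
    have "-(2^j) \<le> k $ i \<and> k $ i \<le> 2^j" for i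
      using a[of i] by (auto simp: abs_le_iff)
    then show "k \<in> vbox {-(2^j)..2^j}" by (auto simp: vbox_def)
  qed
  then show ?thesis by (rule finite_subset) (intro finite_vbox, simp)
qed

lemma A_class_mem:
  fixes a :: "int^'n::finite \<Rightarrow> complex" and N :: nat
  assumes "finite S" "\<And>k. k \<notin> S \<Longrightarrow> a k = 0" "S \<subseteq> vbox {0..2 * int N}" "N \<ge> 1"
    and "0 < \<beta>" "0 < r"
    and bound: "(\<Sum>k\<in>S. norm (a k) powr \<beta>) powr (1 / \<beta>) \<le> (6 * real N) powr (- r)"
  shows "(\<lambda>x. \<Sum>k\<in>S. a k * trig k x) \<in> A_class r \<beta>"
  unfolding A_class_def
proof (intro CollectI exI conjI allI)
  show "(\<lambda>k. norm (a k)) summable_on UNIV"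
    by (subst summable_on_cong_neutral[where T=S and g="\<lambda>k. norm (a k)"]) (use assms(1,2) in auto)
  show "(\<lambda>x. \<Sum>k\<in>S. a k * trig k x) = (\<lambda>x. \<Sum>\<^sub>\<infinity>k. a k * trig k x)"
    using infsum_finite_support[OF assms(1,2)] by simp
  fix j :: nat
  let ?D = "dyadic_block j :: (int^'n) set"
  have fD: "finite ?D" by (rule finite_dyadic_block)
  have eq: "(\<Sum>k\<in>?D. norm (a k) powr \<beta>) = (\<Sum>k\<in>?D \<inter> S. norm (a k) powr \<beta>)"
    by (rule sum.mono_neutral_right) (use fD assms(2) in auto)
  show "(\<Sum>k\<in>?D. norm (a k) powr \<beta>) powr (1 / \<beta>) \<le> 2 powr (- r * real j)"
  proof (cases "?D \<inter> S = {}")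
    case True
    then show ?thesis using eq by simp
  next
    case False
    then obtain k where k: "k \<in> ?D" "k \<in> S" by blast
    have "supnorm_int k \<le> 2 * int N"
      using k(2) assms(3) by (intro supnorm_int_le) (auto simp: vbox_def subset_iff)
    moreover have "\<lfloor>(2::real) powr (real j - 1)\<rfloor> \<le> supnorm_int k"
      using k(1) by (simp add: dyadic_block_def)
    ultimately have "\<lfloor>(2::real) powr (real j - 1)\<rfloor> \<le> 2 * int N" by linarith
    then have "(2::real) powr (real j - 1) < 2 * real N + 1"
      unfolding floor_le_iff by simp
    then have "(2::real) powr real j < 6 * real N"
      using assms(4) by (simp add: powr_diff)
    then have "(6 * real N) powr (- r) \<le> (2 powr real j) powr (- r)"
      using assms(6) by (intro powr_mono2') auto
    also have "\<dots> = 2 powr (- r * real j)" by (simp add: powr_powr mult_ac)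
    finally have R: "(6 * real N) powr (- r) \<le> 2 powr (- r * real j)" .
    have "(\<Sum>k\<in>?D \<inter> S. norm (a k) powr \<beta>) \<le> (\<Sum>k\<in>S. norm (a k) powr \<beta>)"
      by (rule sum_mono2) (use assms(1) in auto)
    then have "(\<Sum>k\<in>?D. norm (a k) powr \<beta>) powr (1 / \<beta>) \<le> (\<Sum>k\<in>S. norm (a k) powr \<beta>) powr (1 / \<beta>)"
      unfolding eq using assms(5) by (intro powr_mono2) (auto intro: sum_nonneg)
    then show ?thesis using bound R by linarith
  qed
qed

lemma Lp_norm_finite_lower:
  fixes g :: "real^'n::finite \<Rightarrow> complex" and q K :: real
  assumes "q > 0" "K \<ge> 0"
    and I: "ennreal K \<le> (\<integral>\<^sup>+ x. ennreal (norm (g x) powr q) * indicator torus x \<partial>lborel)"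
  shows "ennreal ((K / (2 * pi) ^ CARD('n)) powr (1 / q)) \<le> Lp_norm (ennreal q) g"
proof -
  define I where "I = (\<integral>\<^sup>+ x. ennreal (norm (g x) powr q) * indicator torus x \<partial>lborel) / ennreal ((2 * pi) ^ CARD('n))"
  have c0: "(2 * pi) ^ CARD('n) > 0" by simp
  have "ennreal K / ennreal ((2 * pi) ^ CARD('n)) \<le> I"
    unfolding I_def by (rule divide_right_mono_ennreal[OF I])
  then have KI: "ennreal (K / (2 * pi) ^ CARD('n)) \<le> I"
    using divide_ennreal[OF assms(2) c0] by simp
  have pinf: "ennreal q \<noteq> \<infinity>" by simp
  have eq: "Lp_norm (ennreal q) g = (if I = \<infinity> then \<infinity> else ennreal (enn2real I powr (1 / q)))"
    unfolding Lp_norm_def I_def Let_def using assms(1) by simp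
  show ?thesis
  proof (cases "I = \<infinity>")
    case True then show ?thesis using eq by simp
  next
    case False
    then have "enn2real (ennreal (K / (2 * pi) ^ CARD('n))) \<le> enn2real I"
      by (intro enn2real_mono[OF KI]) (simp add: top.not_eq_extremum)
    then have "K / (2 * pi) ^ CARD('n) \<le> enn2real I" using assms(2) by simp
    then have "(K / (2 * pi) ^ CARD('n)) powr (1 / q) \<le> enn2real I powr (1 / q)"
      using assms by (intro powr_mono2) auto
    then show ?thesis using eq False by (simp add: ennreal_leI)
  qed
qed

lemma Lp_lower:
  fixes F h :: "real^'n::finite \<Rightarrow> complex" and p :: ennreal and x0 :: "real^'n"
  assumes p: "2 \<le> p"
    and F[measurable]: "F \<in> borel_measurable lborel" and h[measurable]: "h \<in> borel_measurable lborel"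
    and "\<delta> > 0" "P > 0"
    and Q: "cbox x0 (\<chi> i. x0 $ i + \<delta>) \<subseteq> torus"
    and big: "\<And>x. x \<in> cbox x0 (\<chi> i. x0 $ i + \<delta>) \<Longrightarrow> P \<le> norm (F x)"
  shows "ennreal (P * (\<delta> ^ CARD('n) / (2 * (2 * pi) ^ CARD('n))) powr inv_exp p) \<le> Lp_norm p (\<lambda>x. F x - h x)
       \<or> ennreal (P * (\<delta> ^ CARD('n) / (2 * (2 * pi) ^ CARD('n))) powr inv_exp p) \<le> Lp_norm p (\<lambda>x. - F x - h x)"
proof -
  let ?Q = "cbox x0 (\<chi> i. x0 $ i + \<delta>)"
  have x0Q: "x0 \<in> ?Q" using \<open>\<delta> > 0\<close> by (simp add: mem_box_cart)
  have tri: "norm u \<le> norm (u - v) \<or> norm u \<le> norm (- u - v)" for u v :: complex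
  proof -
    have "2 * norm u \<le> norm (u - v) + norm (- u - v)"
      using norm_triangle_ineq4[of "u - v" "- u - v"] by (simp add: algebra_simps)
    then show ?thesis by linarith
  qed
  have base_pos: "\<delta> ^ CARD('n) / (2 * (2 * pi) ^ CARD('n)) > 0" using \<open>\<delta> > 0\<close> by simp
  show ?thesis
  proof (cases "p = \<infinity>")
    case True
    have ie: "inv_exp p = 0" using True by (simp add: inv_exp_def)
    have x0T: "x0 \<in> torus" using Q x0Q by auto
    have "P \<le> norm (F x0 - h x0) \<or> P \<le> norm (- F x0 - h x0)"
      using big[OF x0Q] tri[of "F x0" "h x0"] by linarith
    then show ?thesis
    proof
      assume "P \<le> norm (F x0 - h x0)"
      then have "ennreal P \<le> Lp_norm p (\<lambda>x. F x - h x)"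
        unfolding Lp_norm_def using True x0T by (auto intro!: SUP_upper2[OF x0T] ennreal_leI)
      then show ?thesis using ie base_pos by simp
    next
      assume "P \<le> norm (- F x0 - h x0)"
      then have "ennreal P \<le> Lp_norm p (\<lambda>x. - F x - h x)"
        unfolding Lp_norm_def using True x0T by (auto intro!: SUP_upper2[OF x0T] ennreal_leI)
      then show ?thesis using ie base_pos by simp
    qed
  next
    case False
    define q where "q = enn2real p"
    have pq: "p = ennreal q" using False unfolding q_def by (cases p) auto
    have q2: "q \<ge> 2" using p pq by (simp add: ennreal_le_iff[symmetric])
    have ie: "inv_exp p = 1 / q" using False by (simp add: inv_exp_def q_def)
    define \<phi>1 where "\<phi>1 x = ennreal (norm (F x - h x) powr q) * indicator torus x" for x
    define \<phi>2 where "\<phi>2 x = ennreal (norm (- F x - h x) powr q) * indicator torus x" for x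
    note torus_measurable[measurable]
    have m1: "\<phi>1 \<in> borel_measurable lborel" unfolding \<phi>1_def by measurable
    have m2: "\<phi>2 \<in> borel_measurable lborel" unfolding \<phi>2_def by measurable
    have Qm: "?Q \<in> sets lborel" by simp
    have meas: "emeasure lborel ?Q = ennreal (\<delta> ^ CARD('n))"
    proof -
      have "emeasure lborel ?Q = ennreal (measure lborel ?Q)"
        using emeasure_lborel_cbox_finite[of x0 "(\<chi> i. x0 $ i + \<delta>)"]
        by (intro emeasure_eq_ennreal_measure) auto
      also have "measure lborel ?Q = \<delta> ^ CARD('n)"
        using x0Q by (subst content_cbox_cart) auto
      finally show ?thesis .
    qed
    define K where "K = P powr q * \<delta> ^ CARD('n)"
    have K0: "K \<ge> 0" unfolding K_def using \<open>\<delta> > 0\<close> by simp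
    have pw: "ennreal (P powr q) * indicator ?Q x \<le> \<phi>1 x + \<phi>2 x" for x
    proof (cases "x \<in> ?Q")
      case True
      then have xT: "x \<in> torus" using Q by auto
      have "P \<le> norm (F x - h x) \<or> P \<le> norm (- F x - h x)"
        using big[OF True] tri[of "F x" "h x"] by linarith
      then have "P powr q \<le> norm (F x - h x) powr q + norm (- F x - h x) powr q"
        using \<open>P > 0\<close> q2
        by (elim disjE) (smt (verit, best) powr_ge_zero powr_mono2)+
      then show ?thesis using True xT
        by (simp add: \<phi>1_def \<phi>2_def ennreal_plus[symmetric] ennreal_leI del: ennreal_plus)
    qed (simp)
    have "ennreal K = (\<integral>\<^sup>+ x. ennreal (P powr q) * indicator ?Q x \<partial>lborel)"
      using meas \<open>\<delta> > 0\<close> by (simp add: nn_integral_cmult_indicator[OF Qm] K_def ennreal_mult)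
    also have "\<dots> \<le> (\<integral>\<^sup>+ x. \<phi>1 x + \<phi>2 x \<partial>lborel)"
      by (intro nn_integral_mono pw)
    also have "\<dots> = integral\<^sup>N lborel \<phi>1 + integral\<^sup>N lborel \<phi>2"
      by (rule nn_integral_add[OF m1 m2])
    finally have sum: "ennreal K \<le> integral\<^sup>N lborel \<phi>1 + integral\<^sup>N lborel \<phi>2" .
    have "ennreal (K / 2) \<le> integral\<^sup>N lborel \<phi>1 \<or> ennreal (K / 2) \<le> integral\<^sup>N lborel \<phi>2"
    proof (rule ccontr)
      assume "\<not> ?thesis"
      then have "integral\<^sup>N lborel \<phi>1 + integral\<^sup>N lborel \<phi>2 < ennreal (K / 2) + ennreal (K / 2)"
        by (intro add_strict_mono) auto
      also have "\<dots> = ennreal K" using K0 by (simp flip: ennreal_plus)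
      finally show False using sum by simp
    qed
    moreover have "(K / 2 / (2 * pi) ^ CARD('n)) powr (1 / q)
        = P * (\<delta> ^ CARD('n) / (2 * (2 * pi) ^ CARD('n))) powr inv_exp p"
    proof -
      have "K / 2 / (2 * pi) ^ CARD('n) = P powr q * (\<delta> ^ CARD('n) / (2 * (2 * pi) ^ CARD('n)))"
        by (simp add: K_def field_simps)
      also have "\<dots> powr (1 / q) = (P powr q) powr (1 / q) * (\<delta> ^ CARD('n) / (2 * (2 * pi) ^ CARD('n))) powr (1 / q)"
        using base_pos \<open>P > 0\<close> by (intro powr_mult)
      also have "(P powr q) powr (1 / q) = P" using q2 \<open>P > 0\<close> by (simp add: powr_powr)
      finally show ?thesis using ie by simp
    qed
    ultimately show ?thesis
      using Lp_norm_finite_lower[of q "K / 2" "\<lambda>x. F x - h x"]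
            Lp_norm_finite_lower[of q "K / 2" "\<lambda>x. - F x - h x"] q2 K0 pq
      unfolding \<phi>1_def \<phi>2_def by auto
  qed
qed

lemma holder_sum:
  fixes u :: "'a \<Rightarrow> real"
  assumes "finite S" "0 < \<beta>" "\<beta> \<le> 2"
  shows "(\<Sum>k\<in>S. \<bar>u k\<bar> powr \<beta>) \<le> real (card S) powr (1 - \<beta> / 2) * (\<Sum>k\<in>S. (u k)^2) powr (\<beta> / 2)"
proof (cases "(\<Sum>k\<in>S. (u k)^2) = 0")
  case True
  then have "\<forall>k\<in>S. u k = 0" using assms(1) by (simp add: sum_nonneg_eq_0_iff)
  then show ?thesis by simp
next
  case False
  define \<Sigma> where "\<Sigma> = (\<Sum>k\<in>S. (u k)^2)"
  have \<Sigma>pos: "\<Sigma> > 0" using False by (simp add: \<Sigma>_def order_less_le sum_nonneg)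
  have Sne: "S \<noteq> {}" using False by auto
  have cS: "real (card S) > 0" using Sne assms(1) by (simp add: card_gt_0_iff)
  define c where "c = \<Sigma> / card S"
  have c0: "c > 0" using \<Sigma>pos cS by (simp add: c_def)
  define \<theta> where "\<theta> = \<beta> / 2"
  have \<theta>: "0 < \<theta>" "\<theta> \<le> 1" using assms by (auto simp: \<theta>_def)
  have each: "\<bar>u k\<bar> powr \<beta> \<le> c powr \<theta> * (\<theta> * ((u k)^2 / c) + (1 - \<theta>))" for k
  proof (cases "u k = 0")
    case True then show ?thesis using \<theta> c0 by simp
  next
    case False
    have a: "(u k)^2 / c > 0" using False c0 by simp
    have "((u k)^2 / c) powr \<theta> * 1 powr (1 - \<theta>) \<le> \<theta> * ((u k)^2 / c) + (1 - \<theta>) * 1"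
      by (rule Youngs_inequality_0) (use \<theta> a in auto)
    then have y: "((u k)^2 / c) powr \<theta> \<le> \<theta> * ((u k)^2 / c) + (1 - \<theta>)" by simp
    have sq: "(u k)^2 = \<bar>u k\<bar> powr 2" by (simp add: powr_numeral)
    have "\<bar>u k\<bar> powr \<beta> = ((u k)^2) powr \<theta>"
      by (subst sq, subst powr_powr, simp add: \<theta>_def)
    also have "\<dots> = (c * ((u k)^2 / c)) powr \<theta>" using c0 by simp
    also have "\<dots> = c powr \<theta> * ((u k)^2 / c) powr \<theta>" using c0 a by (intro powr_mult)
    also have "\<dots> \<le> c powr \<theta> * (\<theta> * ((u k)^2 / c) + (1 - \<theta>))"
      using y by (intro mult_left_mono) auto
    finally show ?thesis .
  qed
  have "(\<Sum>k\<in>S. \<bar>u k\<bar> powr \<beta>) \<le> (\<Sum>k\<in>S. c powr \<theta> * (\<theta> * ((u k)^2 / c) + (1 - \<theta>)))"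
    by (intro sum_mono each)
  also have "\<dots> = c powr \<theta> * (\<Sum>k\<in>S. \<theta> / c * (u k)^2 + (1 - \<theta>))"
    by (simp add: sum_distrib_left)
  also have "(\<Sum>k\<in>S. \<theta> / c * (u k)^2 + (1 - \<theta>)) = \<theta> / c * \<Sigma> + (1 - \<theta>) * card S"
    by (simp add: sum.distrib sum_distrib_left[symmetric] sum_divide_distrib[symmetric] \<Sigma>_def mult.commute)
  also have "\<theta> / c * \<Sigma> + (1 - \<theta>) * card S = card S"
    using c0 cS by (simp add: c_def field_simps)
  also have "c powr \<theta> * card S = real (card S) powr (1 - \<beta> / 2) * \<Sigma> powr (\<beta> / 2)"
  proof -
    have h: "c powr \<theta> * real (card S) powr \<theta> = \<Sigma> powr \<theta>"
    proof -
      have "c * real (card S) = \<Sigma>" using cS by (simp add: c_def)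
      then have "(c * real (card S)) powr \<theta> = \<Sigma> powr \<theta>" by simp
      then show ?thesis using c0 cS by (simp add: powr_mult)
    qed
    have e1: "real (card S) powr (1 - \<theta>) * real (card S) powr \<theta> = card S"
      using cS by (simp add: powr_add[symmetric])
    have "c powr \<theta> * card S = real (card S) powr (1 - \<theta>) * (c powr \<theta> * real (card S) powr \<theta>)"
      using e1 by (simp add: mult_ac)
    also have "\<dots> = real (card S) powr (1 - \<theta>) * \<Sigma> powr \<theta>" using h by simp
    finally show ?thesis by (simp add: \<theta>_def)
  qed
  finally show ?thesis by (simp add: \<Sigma>_def)
qed

lemma conv_prod:
  fixes c d :: "int^'n::finite \<Rightarrow> complex" and B B2 :: "(int^'n) set"
  assumes "finite B" "finite B2" "\<And>l j. l \<in> B \<Longrightarrow> j \<in> B \<Longrightarrow> l + j \<in> B2"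
  shows "(\<Sum>k\<in>B2. (\<Sum>l\<in>B. c l * (if k - l \<in> B then d (k - l) else 0)) * trig k x)
       = (\<Sum>l\<in>B. c l * trig l x) * (\<Sum>j\<in>B. d j * trig j x)"
proof -
  define \<phi> where "\<phi> l k = (if k - l \<in> B then d (k - l) else 0) * trig k x" for l k
  have inner: "(\<Sum>k\<in>B2. \<phi> l k) = (\<Sum>j\<in>B. d j * trig (l + j) x)" if l: "l \<in> B" for l
  proof -
    have "(\<Sum>k\<in>(\<lambda>j. l + j) ` B. \<phi> l k) = (\<Sum>k\<in>B2. \<phi> l k)"
    proof (rule sum.mono_neutral_left)
      show "finite B2" by (rule assms(2))
      show "(\<lambda>j. l + j) ` B \<subseteq> B2" using assms(3) l by auto
      show "\<forall>k\<in>B2 - (\<lambda>j. l + j) ` B. \<phi> l k = 0"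
      proof
        fix k assume k: "k \<in> B2 - (\<lambda>j. l + j) ` B"
        have "k - l \<notin> B"
        proof
          assume "k - l \<in> B"
          then have "k \<in> (\<lambda>j. l + j) ` B" by (intro image_eqI[of _ _ "k - l"]) auto
          with k show False by auto
        qed
        then show "\<phi> l k = 0" by (simp add: \<phi>_def)
      qed
    qed
    then have "(\<Sum>k\<in>B2. \<phi> l k) = (\<Sum>k\<in>(\<lambda>j. l + j) ` B. \<phi> l k)" by simp
    also have "\<dots> = (\<Sum>j\<in>B. \<phi> l (l + j))"
      by (subst sum.reindex) (auto simp: inj_on_def)
    also have "\<dots> = (\<Sum>j\<in>B. d j * trig (l + j) x)"
      by (rule sum.cong) (auto simp: \<phi>_def)
    finally show ?thesis .
  qed
  have "(\<Sum>k\<in>B2. (\<Sum>l\<in>B. c l * (if k - l \<in> B then d (k - l) else 0)) * trig k x)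
      = (\<Sum>k\<in>B2. \<Sum>l\<in>B. c l * \<phi> l k)"
    unfolding \<phi>_def by (simp add: sum_distrib_left sum_distrib_right mult_ac)
  also have "\<dots> = (\<Sum>l\<in>B. \<Sum>k\<in>B2. c l * \<phi> l k)"
    by (rule sum.swap)
  also have "\<dots> = (\<Sum>l\<in>B. c l * (\<Sum>j\<in>B. d j * trig (l + j) x))"
    by (rule sum.cong[OF refl]) (simp add: sum_distrib_left[symmetric] inner)
  also have "\<dots> = (\<Sum>l\<in>B. c l * trig l x) * (\<Sum>j\<in>B. d j * trig j x)"
  proof -
    have "(\<Sum>l\<in>B. c l * trig l x) * (\<Sum>j\<in>B. d j * trig j x) = (\<Sum>l\<in>B. \<Sum>j\<in>B. (c l * trig l x) * (d j * trig j x))"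
      by (rule sum_product)
    also have "\<dots> = (\<Sum>l\<in>B. c l * (\<Sum>j\<in>B. d j * trig (l + j) x))"
      by (simp only: sum_distrib_left trig_add mult_ac)
    finally show ?thesis by (rule sym)
  qed
  finally show ?thesis .
qed

lemma trig_lip:
  fixes k :: "int^'n::finite" and x y :: "real^'n"
  assumes "\<And>i. \<bar>k $ i\<bar> \<le> L" "\<And>i. \<bar>x $ i - y $ i\<bar> \<le> \<delta>"
  shows "norm (trig k x - trig k y) \<le> real CARD('n) * (L * \<delta>)"
proof -
  have "norm (trig k x - trig k y) \<le> \<bar>(\<Sum>i\<in>UNIV. real_of_int (k $ i) * x $ i) - (\<Sum>i\<in>UNIV. real_of_int (k $ i) * y $ i)\<bar>"
    unfolding trig_def by (rule cis_lipschitz)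
  also have "\<dots> = \<bar>\<Sum>i\<in>UNIV. real_of_int (k $ i) * (x $ i - y $ i)\<bar>"
    by (simp add: sum_subtractf[symmetric] algebra_simps)
  also have "\<dots> \<le> (\<Sum>i\<in>UNIV. \<bar>real_of_int (k $ i) * (x $ i - y $ i)\<bar>)"
    by (rule sum_abs)
  also have "\<dots> \<le> (\<Sum>i\<in>(UNIV::'n set). L * \<delta>)"
  proof (rule sum_mono)
    fix i :: 'n
    have "\<bar>real_of_int (k $ i)\<bar> \<le> L" using assms(1)[of i] by linarith
    then show "\<bar>real_of_int (k $ i) * (x $ i - y $ i)\<bar> \<le> L * \<delta>"
      unfolding abs_mult using assms(2)[of i] by (intro mult_mono) auto
  qed
  also have "\<dots> = real CARD('n) * (L * \<delta>)" by simp
  finally show ?thesis .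
qed

lemma core:
  fixes \<xi> :: "(real^'n::finite) list" and N :: nat and \<beta> r :: real
  assumes N1: "N \<ge> 1" and len: "length \<xi> < (N + 1) ^ CARD('n)"
    and \<beta>: "0 < \<beta>" "\<beta> \<le> 1" and r: "0 < r"
  defines "\<delta> \<equiv> 1 / (2 ^ (CARD('n) + 2) * real CARD('n) * real N)"
  defines "P \<equiv> (6 * real N) powr (- r) * sqrt (real ((N + 1) ^ CARD('n))) / real ((2 * N + 1) ^ CARD('n)) powr (1 / \<beta> - 1 / 2) / 2"
  shows "\<exists>F x0. F \<in> A_class r \<beta> \<and> (\<lambda>x. - F x) \<in> A_class r \<beta> \<and> (\<forall>y\<in>set \<xi>. F y = 0) \<and>
     F \<in> borel_measurable lborel \<and> cbox x0 (\<chi> i. x0 $ i + \<delta>) \<subseteq> torus \<and>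
     (\<forall>x\<in>cbox x0 (\<chi> i. x0 $ i + \<delta>). P \<le> norm (F x))"
proof -
  define d where "d = CARD('n)"
  have d1: "d \<ge> 1" unfolding d_def by (simp add: Suc_le_eq)
  define B :: "(int^'n) set" where "B = vbox {0..int N}"
  define B2 :: "(int^'n) set" where "B2 = vbox {0..2 * int N}"
  have finB: "finite B" and finB2: "finite B2" unfolding B_def B2_def by (auto intro: finite_vbox)
  have cardB: "card B = (N + 1) ^ d" unfolding B_def d_def by (subst card_vbox) (auto simp: nat_add_distrib)
  have cardB2: "card B2 = (2 * N + 1) ^ d" unfolding B2_def d_def by (subst card_vbox) (auto simp: nat_add_distrib nat_mult_distrib)
  define n where "n = real (card B)"
  define n2 where "n2 = real (card B2)"
  have n_pos: "n > 0" unfolding n_def cardB by simp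
  have n2_pos: "n2 > 0" unfolding n2_def cardB2 by simp
  have BB2: "l + j \<in> B2" if "l \<in> B" "j \<in> B" for l j
  proof -
    have h: "l $ i + j $ i \<in> {0..2 * int N}" for i
    proof -
      have "l $ i \<in> {0..int N}" "j $ i \<in> {0..int N}" using that by (auto simp: B_def vbox_def)
      then show ?thesis by simp
    qed
    then show ?thesis by (simp add: B2_def vbox_def)
  qed
  obtain c where c1: "\<forall>k. k \<notin> B \<longrightarrow> c k = 0" and c2: "\<exists>k\<in>B. c k \<noteq> 0"
    and c3: "\<forall>L\<in>set (map (\<lambda>y k. trig k y) \<xi>). (\<Sum>k\<in>B. c k * L k) = 0"
    using exists_kernel[OF finB, of "map (\<lambda>y k. trig k y) \<xi>"] len cardB by (auto simp: d_def)
  define g where "g x = (\<Sum>k\<in>B. c k * trig k x)" for x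
  have g\<xi>: "g y = 0" if "y \<in> set \<xi>" for y
    using c3 that by (auto simp: g_def)
  define M where "M = 2 * N + 1"
  have M0: "M > 0" by (simp add: M_def)
  define G :: "(real^'n) set" where "G = grid M"
  have finG: "finite G" unfolding G_def by (rule finite_grid)
  have GneE: "G \<noteq> {}" unfolding G_def using M0 by (rule grid_nonempty)
  have parsB: "(\<Sum>x\<in>G. (norm (\<Sum>k\<in>B. a k * trig k x))^2) = real M ^ d * (\<Sum>k\<in>B. (norm (a k))^2)" for a
    unfolding G_def d_def B_def by (rule parseval_grid) (auto simp: M_def intro: finite_vbox)
  have parsB2: "(\<Sum>x\<in>G. (norm (\<Sum>k\<in>B2. a k * trig k x))^2) = real M ^ d * (\<Sum>k\<in>B2. (norm (a k))^2)" for a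
    unfolding G_def d_def B2_def by (rule parseval_grid) (auto simp: M_def intro: finite_vbox)
  define A where "A = Max ((\<lambda>x. norm (g x)) ` G)"
  have "A \<in> (\<lambda>x. norm (g x)) ` G"
    unfolding A_def using finG GneE by (intro Max_in) auto
  then obtain x0 where x0G: "x0 \<in> G" and x0A: "norm (g x0) = A" by auto
  have Amax: "norm (g x) \<le> A" if "x \<in> G" for x
    unfolding A_def using finG that by (intro Max_ge) auto
  have A_pos: "A > 0"
  proof (rule ccontr)
    assume "\<not> A > 0"
    then have "\<forall>x\<in>G. g x = 0" using Amax by (meson norm_ge_zero norm_le_zero_iff order_trans not_le)
    then have "(\<Sum>x\<in>G. (norm (g x))^2) = 0" by simp
    moreover have "(\<Sum>k\<in>B. (norm (c k))^2) > 0"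
      using c2 finB by (auto intro!: sum_pos2)
    ultimately show False using parsB[of c] M0 by (simp add: g_def)
  qed
  \<comment> \<open>Step 3: the Dirichlet-type kernel centered at the peak\<close>
  define dd where "dd j = cnj (trig j x0) / complex_of_real n" for j
  define D where "D x = (\<Sum>j\<in>B. dd j * trig j x)" for x
  have D0: "D x0 = 1"
  proof -
    have "D x0 = (\<Sum>j\<in>B. 1 / complex_of_real n)"
      unfolding D_def dd_def by (rule sum.cong) (auto simp: cnj_trig trig_add[symmetric])
    then show ?thesis using n_pos by (simp add: n_def)
  qed
  have sumD: "(\<Sum>x\<in>G. (norm (D x))^2) = real M ^ d / n"
  proof -
    have "(\<Sum>x\<in>G. (norm (D x))^2) = real M ^ d * (\<Sum>k\<in>B. (norm (dd k))^2)"
      unfolding D_def by (rule parsB)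
    also have "(\<Sum>k\<in>B. (norm (dd k))^2) = (\<Sum>k\<in>B. 1 / n^2)"
      using n_pos by (intro sum.cong) (auto simp: dd_def norm_divide power_divide)
    also have "\<dots> = 1 / n" using n_pos by (simp add: n_def power2_eq_square)
    finally show ?thesis by simp
  qed
  define e where "e k = (if k \<in> B2 then (\<Sum>l\<in>B. c l * (if k - l \<in> B then dd (k - l) else 0)) else 0)" for k
  define f where "f x = (\<Sum>k\<in>B2. e k * trig k x)" for x
  have fgD: "f x = g x * D x" for x
  proof -
    have "f x = (\<Sum>k\<in>B2. (\<Sum>l\<in>B. c l * (if k - l \<in> B then dd (k - l) else 0)) * trig k x)"
      unfolding f_def e_def by (rule sum.cong) auto
    also have "\<dots> = g x * D x"
      unfolding g_def D_def by (rule conv_prod[OF finB finB2 BB2])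
    finally show ?thesis .
  qed
  define S2 where "S2 = (\<Sum>k\<in>B2. (norm (e k))^2)"
  have S2_bound: "S2 \<le> A^2 / n"
  proof -
    have "real M ^ d * S2 = (\<Sum>x\<in>G. (norm (f x))^2)"
      unfolding S2_def f_def by (rule parsB2[symmetric])
    also have "\<dots> = (\<Sum>x\<in>G. (norm (g x))^2 * (norm (D x))^2)"
      by (simp add: fgD norm_mult power_mult_distrib)
    also have "\<dots> \<le> (\<Sum>x\<in>G. A^2 * (norm (D x))^2)"
      using Amax by (intro sum_mono mult_right_mono power_mono) auto
    also have "\<dots> = A^2 * (real M ^ d / n)" by (simp add: sum_distrib_left[symmetric] sumD)
    finally have "real M ^ d * S2 \<le> real M ^ d * (A^2 / n)" by (simp add: mult.commute)
    moreover have "real M ^ d > 0" using M0 by simp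
    ultimately show ?thesis by (rule mult_left_le_imp_le)
  qed
  have S2_nonneg: "S2 \<ge> 0" unfolding S2_def by (intro sum_nonneg) auto
  have n2_le: "n2 \<le> 2 ^ d * n"
  proof -
    have "(2 * N + 1) ^ d \<le> (2 * (N + 1)) ^ d" by (intro power_mono) auto
    then have "real ((2 * N + 1) ^ d) \<le> real ((2 * (N + 1)) ^ d)" by (simp only: of_nat_le_iff)
    also have "real ((2 * (N + 1)) ^ d) = 2 ^ d * real ((N + 1) ^ d)" by (simp only: power_mult_distrib of_nat_mult of_nat_power of_nat_numeral)
    finally show ?thesis unfolding n2_def n_def cardB cardB2 .
  qed
  define R where "R = (6 * real N) powr (- r)"
  have R_pos: "R > 0" unfolding R_def using N1 by simp
  define \<gamma> where "\<gamma> = 1 / \<beta> - 1 / 2"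
  define lam where "lam = R * sqrt n / (n2 powr \<gamma> * A)"
  have lam_pos: "lam > 0" unfolding lam_def using R_pos n_pos n2_pos A_pos by simp
  define a where "a k = complex_of_real lam * e k" for k
  define F where "F x = (\<Sum>k\<in>B2. a k * trig k x)" for x
  have Ff: "F x = lam * f x" for x
    unfolding F_def f_def a_def by (simp add: sum_distrib_left mult_ac)
  have a_out: "a k = 0" if "k \<notin> B2" for k using that by (simp add: a_def e_def)
  have holder: "(\<Sum>k\<in>B2. norm (e k) powr \<beta>) \<le> n2 powr (1 - \<beta> / 2) * S2 powr (\<beta> / 2)"
    using holder_sum[OF finB2 \<beta>(1), of "\<lambda>k. norm (e k)"] \<beta> by (simp add: n2_def S2_def)
  have coef: "(\<Sum>k\<in>B2. norm (a k) powr \<beta>) powr (1 / \<beta>) \<le> (6 * real N) powr (- r)"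
  proof -
    have "(\<Sum>k\<in>B2. norm (a k) powr \<beta>) = lam powr \<beta> * (\<Sum>k\<in>B2. norm (e k) powr \<beta>)"
      unfolding sum_distrib_left using lam_pos
      by (intro sum.cong refl) (simp add: a_def norm_mult powr_mult)
    also have "\<dots> \<le> lam powr \<beta> * (n2 powr (1 - \<beta> / 2) * (A^2 / n) powr (\<beta> / 2))"
    proof -
      have "S2 powr (\<beta> / 2) \<le> (A^2 / n) powr (\<beta> / 2)"
        by (rule powr_mono2) (use S2_bound S2_nonneg \<beta> in auto)
      then have "n2 powr (1 - \<beta> / 2) * S2 powr (\<beta> / 2) \<le> n2 powr (1 - \<beta> / 2) * (A^2 / n) powr (\<beta> / 2)"
        by (rule mult_left_mono) simp
      then have "(\<Sum>k\<in>B2. norm (e k) powr \<beta>) \<le> n2 powr (1 - \<beta> / 2) * (A^2 / n) powr (\<beta> / 2)"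
        using holder by linarith
      then show ?thesis by (rule mult_left_mono) simp
    qed
    also have "\<dots> = R powr \<beta>"
    proof -
      have l1: "lam powr \<beta> = R powr \<beta> * n powr (\<beta> / 2) / (n2 powr (\<gamma> * \<beta>) * A powr \<beta>)"
      proof -
        have s1: "sqrt n powr \<beta> = n powr (\<beta> / 2)"
          using n_pos by (simp add: powr_half_sqrt[symmetric] powr_powr)
        have "lam powr \<beta> = (R * sqrt n) powr \<beta> / (n2 powr \<gamma> * A) powr \<beta>"
          unfolding lam_def using R_pos n_pos n2_pos A_pos by (auto intro!: powr_divide)
        also have "(R * sqrt n) powr \<beta> = R powr \<beta> * sqrt n powr \<beta>"
          using R_pos n_pos by (auto intro!: powr_mult)
        also have "(n2 powr \<gamma> * A) powr \<beta> = (n2 powr \<gamma>) powr \<beta> * A powr \<beta>"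
          using n2_pos A_pos by (auto intro!: powr_mult)
        also have "(n2 powr \<gamma>) powr \<beta> = n2 powr (\<gamma> * \<beta>)" by (rule powr_powr)
        finally show ?thesis unfolding s1 .
      qed
      have l2: "(A^2 / n) powr (\<beta> / 2) = A powr \<beta> / n powr (\<beta> / 2)"
      proof -
        have "(A^2 / n) powr (\<beta> / 2) = (A^2) powr (\<beta> / 2) / n powr (\<beta> / 2)"
          using A_pos n_pos by (auto intro!: powr_divide)
        also have "(A^2) powr (\<beta> / 2) = A powr \<beta>"
        proof -
          have e: "A^2 = A powr 2" using A_pos by (simp add: powr_numeral)
          show ?thesis unfolding e powr_powr by simp
        qed
        finally show ?thesis .
      qed
      have l3: "\<gamma> * \<beta> = 1 - \<beta> / 2" unfolding \<gamma>_def using \<beta>(1) by (simp add: field_simps)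
      show ?thesis unfolding l1 l2 l3 using n_pos n2_pos A_pos R_pos by (simp add: field_simps)
    qed
    finally have "(\<Sum>k\<in>B2. norm (a k) powr \<beta>) \<le> R powr \<beta>" .
    then have "(\<Sum>k\<in>B2. norm (a k) powr \<beta>) powr (1 / \<beta>) \<le> (R powr \<beta>) powr (1 / \<beta>)"
      using \<beta>(1) by (intro powr_mono2) (auto intro: sum_nonneg)
    also have "\<dots> = R" using \<beta>(1) R_pos by (simp add: powr_powr)
    finally show ?thesis by (simp add: R_def)
  qed
  have B2sub: "B2 \<subseteq> vbox {0..2 * int N}" by (simp add: B2_def)
  have FA: "F \<in> A_class r \<beta>"
    unfolding F_def[abs_def] by (rule A_class_mem[OF finB2 a_out B2sub N1 \<beta>(1) r coef])
  have mFA: "(\<lambda>x. - F x) \<in> A_class r \<beta>"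
  proof -
    have "(\<lambda>x. - F x) = (\<lambda>x. \<Sum>k\<in>B2. (- a k) * trig k x)"
      by (simp add: F_def sum_negf[symmetric])
    moreover have "(\<lambda>x. \<Sum>k\<in>B2. (- a k) * trig k x) \<in> A_class r \<beta>"
      by (rule A_class_mem[OF finB2 _ B2sub N1 \<beta>(1) r]) (use a_out coef in auto)
    ultimately show ?thesis by simp
  qed
  have F\<xi>: "\<forall>y\<in>set \<xi>. F y = 0" using g\<xi> by (simp add: Ff fgD)
  have Fm: "F \<in> borel_measurable lborel"
  proof -
    have "continuous_on UNIV F" unfolding F_def[abs_def]
      by (intro continuous_intros continuous_on_trig)
    then show ?thesis by (simp add: borel_measurable_continuous_onI)
  qed
  have \<delta>_pos: "\<delta> > 0" unfolding \<delta>_def d_def[symmetric] using N1 d1 by simp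
  have \<delta>_le: "\<delta> \<le> 1 / (8 * real N)"
  proof -
    have "(8::real) \<le> 2 ^ (d + 2) * real d"
    proof -
      have "(8::real) = 2 ^ 3 * 1" by simp
      also have "\<dots> \<le> 2 ^ (d + 2) * real d" using d1 by (intro mult_mono power_increasing) auto
      finally show ?thesis .
    qed
    then show ?thesis unfolding \<delta>_def d_def[symmetric] using N1
      by (intro divide_left_mono mult_right_mono) auto
  qed
  have cube: "cbox x0 (\<chi> i. x0 $ i + \<delta>) \<subseteq> torus"
  proof
    fix x assume x: "x \<in> cbox x0 (\<chi> i. x0 $ i + \<delta>)"
    have "0 \<le> x $ i \<and> x $ i < 2 * pi" for i
    proof -
      obtain t where t: "t < M" "x0 $ i = 2 * pi * real t / real M"
        using x0G by (auto simp: G_def grid_def vbox_def)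
      have xi: "x0 $ i \<le> x $ i" "x $ i \<le> x0 $ i + \<delta>" using x by (auto simp: mem_box_cart)
      have "x0 $ i \<ge> 0" using t by simp
      moreover have "x0 $ i + \<delta> < 2 * pi"
      proof -
        have "real t \<le> real M - 1" using t(1) by linarith
        then have "x0 $ i \<le> 2 * pi * (real M - 1) / real M" using t M0 by (simp add: divide_right_mono)
        also have "\<dots> = 2 * pi - 2 * pi / real M" using M0 by (simp add: field_simps)
        finally have h1: "x0 $ i \<le> 2 * pi - 2 * pi / real M" .
        have "1 / (8 * real N) < 2 * pi / real M"
        proof -
          have "real M \<le> 3 * real N" using N1 by (simp add: M_def)
          then have "2 * pi / (3 * real N) \<le> 2 * pi / real M" using M0 by (intro divide_left_mono) auto
          moreover have "1 / (8 * real N) < 2 * pi / (3 * real N)" using N1 pi_gt3 by (simp add: field_simps)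
          ultimately show ?thesis by linarith
        qed
        then show ?thesis using h1 \<delta>_le by linarith
      qed
      ultimately show ?thesis using xi by linarith
    qed
    then show "x \<in> torus" by (simp add: torus_def)
  qed
  have sum_e: "(\<Sum>k\<in>B2. norm (e k)) \<le> A * 2 ^ d"
  proof -
    have "(\<Sum>k\<in>B2. norm (e k))^2 \<le> S2 * n2"
      using sum_squared_le_sum_of_squares[of "\<lambda>k. norm (e k)" B2] by (simp add: S2_def n2_def)
    also have "\<dots> \<le> (A^2 / n) * (2 ^ d * n)"
      using S2_bound n2_le S2_nonneg n2_pos by (intro mult_mono) auto
    also have "\<dots> = A^2 * 2 ^ d" using n_pos by (simp add: field_simps)
    also have "\<dots> = (A * sqrt (2 ^ d))^2" by (simp add: power_mult_distrib)
    finally have "(\<Sum>k\<in>B2. norm (e k)) \<le> A * sqrt (2 ^ d)"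
      by (rule power2_le_imp_le) (use A_pos in auto)
    also have "sqrt (2 ^ d) \<le> (2::real) ^ d"
    proof -
      have "(2::real) ^ d * 1 \<le> 2 ^ d * 2 ^ d" by (intro mult_left_mono) auto
      then have "sqrt ((2::real) ^ d) \<le> sqrt ((2 ^ d)^2)" by (intro real_sqrt_le_mono) (simp add: power2_eq_square)
      then show ?thesis by simp
    qed
    finally show ?thesis using A_pos by simp
  qed
  have peak: "norm (F x0) = lam * A"
    using lam_pos x0A by (simp add: Ff fgD D0 norm_mult)
  have close: "norm (F x - F x0) \<le> lam * A / 2" if x: "x \<in> cbox x0 (\<chi> i. x0 $ i + \<delta>)" for x
  proof -
    have xd: "\<bar>x $ i - x0 $ i\<bar> \<le> \<delta>" for i
    proof -
      have "x0 $ i \<le> x $ i \<and> x $ i \<le> x0 $ i + \<delta>" using x by (simp add: mem_box_cart)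
      then show ?thesis by simp
    qed
    have tk: "norm (trig k x - trig k x0) \<le> real d * (real (2 * N) * \<delta>)" if k: "k \<in> B2" for k
    proof -
      have ki: "\<bar>k $ i\<bar> \<le> 2 * int N" for i using k by (auto simp: B2_def vbox_def)
      note tl = trig_lip[of k _ x x0 \<delta>, OF ki xd]
      show ?thesis using tl unfolding d_def by simp
    qed
    have "F x - F x0 = (\<Sum>k\<in>B2. a k * (trig k x - trig k x0))"
      by (simp add: F_def sum_subtractf[symmetric] right_diff_distrib)
    then have "norm (F x - F x0) \<le> (\<Sum>k\<in>B2. norm (a k * (trig k x - trig k x0)))"
      by (simp add: norm_sum)
    also have "\<dots> \<le> (\<Sum>k\<in>B2. lam * norm (e k) * (real d * (real (2 * N) * \<delta>)))"
      using lam_pos tk by (intro sum_mono) (simp add: a_def norm_mult mult_left_mono)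
    also have "\<dots> = lam * (real d * (real (2 * N) * \<delta>)) * (\<Sum>k\<in>B2. norm (e k))"
      by (simp add: sum_distrib_left mult_ac)
    also have "\<dots> \<le> lam * (real d * (real (2 * N) * \<delta>)) * (A * 2 ^ d)"
      using lam_pos \<delta>_pos sum_e by (intro mult_left_mono) auto
    also have "\<dots> = lam * A / 2"
      unfolding \<delta>_def d_def[symmetric] using d1 N1 by (simp add: field_simps power_add)
    finally show ?thesis .
  qed
  have PlA: "P = lam * A / 2"
    unfolding P_def lam_def R_def \<gamma>_def n_def n2_def cardB cardB2 d_def using A_pos by simp
  have lower: "P \<le> norm (F x)" if "x \<in> cbox x0 (\<chi> i. x0 $ i + \<delta>)" for x
  proof -
    have "norm (F x0) \<le> norm (F x) + norm (F x - F x0)"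
      by (metis add.commute norm_triangle_ineq4 norm_minus_commute order_trans norm_triangle_sub)
    then show ?thesis using close[OF that] peak PlA by linarith
  qed
  show ?thesis
    by (intro exI[of _ F] exI[of _ x0] conjI FA mFA F\<xi> Fm cube ballI lower)
qed

lemma choose_N:
  fixes m d :: nat
  assumes "m \<ge> 1" "d \<ge> 1"
  defines "N \<equiv> nat \<lceil>real m powr (1 / real d)\<rceil>"
  shows "N \<ge> 1" "m < (N + 1) ^ d" "real N \<le> 2 * real m powr (1 / real d)"
proof -
  define x where "x = real m powr (1 / real d)"
  have x1: "x \<ge> 1" unfolding x_def using assms by (intro ge_one_powr_ge_zero) auto
  have Nx: "real N = real_of_int \<lceil>x\<rceil>" unfolding N_def x_def using x1 x_def by simp
  have Nge: "real N \<ge> x" using Nx by linarith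
  have Nlt: "real N < x + 1" using Nx by linarith
  show "N \<ge> 1" using Nge x1 by linarith
  show "real N \<le> 2 * real m powr (1 / real d)" using Nlt x1 unfolding x_def by linarith
  have "x ^ d = real m" unfolding x_def using assms
    by (simp add: powr_realpow[symmetric] powr_powr)
  then have "real m \<le> real N ^ d" using Nge x1 by (metis power_mono order.trans order_refl zero_le_one order_trans[OF zero_le_one x1])
  also have "\<dots> < real (N + 1) ^ d" using assms(2) by (intro power_strict_mono) auto
  finally show "m < (N + 1) ^ d" by (metis of_nat_less_iff of_nat_power)
qed

lemma final_real:
  fixes N m d :: nat and \<beta> r \<iota> :: real
  assumes d1: "d \<ge> 1" and N1: "N \<ge> 1" and m1: "m \<ge> 1" and Nm: "real N \<le> 2 * real m powr (1 / real d)"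
    and \<iota>: "0 \<le> \<iota>" and \<beta>: "0 < \<beta>" "\<beta> \<le> 1" and r: "0 < r"
  defines "\<delta> \<equiv> 1 / (2 ^ (d + 2) * real d * real N)"
  defines "P \<equiv> (6 * real N) powr (- r) * sqrt (real ((N + 1) ^ d)) / real ((2 * N + 1) ^ d) powr (1 / \<beta> - 1 / 2) / 2"
  defines "K1 \<equiv> 1 / 2 * 6 powr (- r) * 3 powr (- (real d * (1 / \<beta> - 1 / 2)))"
  defines "K2 \<equiv> (1 / (2 ^ (d + 2) * real d)) ^ d / (2 * (2 * pi) ^ d)"
  defines "e \<equiv> 1 - \<iota> - 1 / \<beta> - r / real d"
  shows "K1 * K2 powr \<iota> * 2 powr (real d * e) * real m powr e \<le> P * (\<delta> ^ d / (2 * (2 * pi) ^ d)) powr \<iota>"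
proof -
  define \<gamma> where "\<gamma> = 1 / \<beta> - 1 / 2"
  have \<gamma>0: "\<gamma> \<ge> 0" unfolding \<gamma>_def using \<beta> by (simp add: field_simps)
  have Npos: "real N > 0" using N1 by simp
  have dpos: "real d > 0" using d1 by simp
  have P_low: "K1 * real N powr (real d - real d / \<beta> - r) \<le> P"
  proof -
    have a: "(6 * real N) powr (- r) = 6 powr (- r) * real N powr (- r)"
      using Npos by (auto intro!: powr_mult)
    have s: "real N powr (real d / 2) \<le> sqrt (real ((N + 1) ^ d))"
    proof -
      have "real N powr (real d / 2) = sqrt (real N powr real d)"
        using Npos by (simp add: powr_half_sqrt_powr)
      also have "real N powr real d = real N ^ d" using Npos by (simp add: powr_realpow)
      also have "sqrt (real N ^ d) \<le> sqrt (real ((N + 1) ^ d))"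
        by (intro real_sqrt_le_mono) (simp add: power_mono)
      finally show ?thesis .
    qed
    have t: "real ((2 * N + 1) ^ d) powr \<gamma> \<le> 3 powr (real d * \<gamma>) * real N powr (real d * \<gamma>)"
    proof -
      have "real ((2 * N + 1) ^ d) = (2 * real N + 1) ^ d" by (simp add: add.commute)
      also have "\<dots> \<le> (3 * real N) ^ d" using N1 by (intro power_mono) auto
      finally have "real ((2 * N + 1) ^ d) \<le> (3 * real N) ^ d" .
      then have "real ((2 * N + 1) ^ d) powr \<gamma> \<le> ((3 * real N) ^ d) powr \<gamma>"
        using \<gamma>0 by (intro powr_mono2) auto
      also have "((3 * real N) ^ d) = (3 * real N) powr real d"
        using Npos by (simp add: powr_realpow)
      also have "\<dots> powr \<gamma> = (3 * real N) powr (real d * \<gamma>)" by (simp add: powr_powr)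
      also have "\<dots> = 3 powr (real d * \<gamma>) * real N powr (real d * \<gamma>)"
        using Npos by (auto intro!: powr_mult)
      finally show ?thesis .
    qed
    have tpos: "real ((2 * N + 1) ^ d) powr \<gamma> > 0" by simp
    have "K1 * real N powr (real d - real d / \<beta> - r)
        = (6 powr (- r) * real N powr (- r)) * real N powr (real d / 2)
          / (3 powr (real d * \<gamma>) * real N powr (real d * \<gamma>)) / 2"
    proof -
      have ex: "real d - real d / \<beta> - r = - r + real d / 2 - real d * \<gamma>"
        unfolding \<gamma>_def by (simp add: field_simps)
      have p1: "real N powr (- r + real d / 2 - real d * \<gamma>) = real N powr (- r) * real N powr (real d / 2) / real N powr (real d * \<gamma>)"
        by (simp only: powr_add powr_diff)
      have p2: "(3::real) powr (- (real d * \<gamma>)) = 1 / 3 powr (real d * \<gamma>)"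
        by (simp add: powr_minus_divide)
      have pos: "real N powr (real d * \<gamma>) > 0" "(3::real) powr (real d * \<gamma>) > 0" using Npos by auto
      show ?thesis unfolding ex K1_def \<gamma>_def[symmetric] p1 p2
        using pos by (simp add: field_simps)
    qed
    also have "\<dots> \<le> (6 * real N) powr (- r) * sqrt (real ((N + 1) ^ d)) / real ((2 * N + 1) ^ d) powr \<gamma> / 2"
      unfolding a using s t tpos by (intro divide_right_mono frac_le mult_left_mono) auto
    also have "\<dots> = P" unfolding P_def \<gamma>_def ..
    finally show ?thesis .
  qed
  have K2pos: "K2 > 0" unfolding K2_def using dpos by simp
  have base: "\<delta> ^ d / (2 * (2 * pi) ^ d) = K2 * real N powr (- real d)"
    unfolding \<delta>_def K2_def using Npos by (simp add: powr_minus powr_realpow power_divide field_simps)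
  have ii: "(\<delta> ^ d / (2 * (2 * pi) ^ d)) powr \<iota> = K2 powr \<iota> * real N powr (- real d * \<iota>)"
    unfolding base using K2pos Npos by (simp add: powr_mult powr_powr)
  have de_neg: "real d * e \<le> 0"
  proof -
    have "1 / \<beta> \<ge> 1" using \<beta> by simp
    then have "e \<le> 0" unfolding e_def using \<iota> r dpos by (smt (verit) divide_pos_pos)
    then show ?thesis using dpos by (simp add: mult_nonneg_nonpos)
  qed
  have mpos: "real m > 0" using m1 by simp
  have iii: "2 powr (real d * e) * real m powr e \<le> real N powr (real d * e)"
  proof -
    have "(2 * real m powr (1 / real d)) powr (real d * e) \<le> real N powr (real d * e)"
      using de_neg Npos Nm by (intro powr_mono2') auto
    moreover have "(2 * real m powr (1 / real d)) powr (real d * e) = 2 powr (real d * e) * real m powr e"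
    proof -
      have "(2 * real m powr (1 / real d)) powr (real d * e) = 2 powr (real d * e) * (real m powr (1 / real d)) powr (real d * e)"
        using mpos by (auto intro!: powr_mult)
      also have "(real m powr (1 / real d)) powr (real d * e) = real m powr e"
        using dpos by (simp add: powr_powr)
      finally show ?thesis .
    qed
    ultimately show ?thesis by simp
  qed
  have K1pos: "K1 > 0" unfolding K1_def by simp
  have "K1 * K2 powr \<iota> * 2 powr (real d * e) * real m powr e \<le> K1 * K2 powr \<iota> * real N powr (real d * e)"
    using iii K1pos K2pos by (simp add: mult.assoc mult_left_mono)
  also have "\<dots> = (K1 * real N powr (real d - real d / \<beta> - r)) * (K2 powr \<iota> * real N powr (- real d * \<iota>))"
  proof -
    have "real d * e = (real d - real d / \<beta> - r) + (- real d * \<iota>)"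
      unfolding e_def using dpos by (simp add: field_simps)
    then have "real N powr (real d * e) = real N powr (real d - real d / \<beta> - r) * real N powr (- real d * \<iota>)"
      by (simp only: powr_add)
    then show ?thesis by (simp only: mult_ac)
  qed
  also have "\<dots> \<le> P * (K2 powr \<iota> * real N powr (- real d * \<iota>))"
    using P_low by (intro mult_right_mono) auto
  also have "\<dots> = P * (\<delta> ^ d / (2 * (2 * pi) ^ d)) powr \<iota>" unfolding ii ..
  finally show ?thesis .
qed

theorem proposition5p6:
  fixes \<beta> r :: real and p :: ennreal
  assumes "0 < \<beta>" and "\<beta> \<le> 1" and "0 < r" and "2 \<le> p"
  shows "\<exists>c>0. \<forall>m::nat.
     ennreal (c * real m powr (1 - inv_exp p - 1 / \<beta> - r / real CARD('n::finite)))
       \<le> rho_o m (A_class r \<beta> :: (real ^ 'n \<Rightarrow> complex) set) p"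
proof -
  define d where "d = CARD('n)"
  have d1: "d \<ge> 1" unfolding d_def by (simp add: Suc_le_eq)
  define \<iota> where "\<iota> = inv_exp p"
  have \<iota>0: "0 \<le> \<iota>"
  proof (cases "p = \<infinity>")
    case True then show ?thesis by (simp add: \<iota>_def inv_exp_def)
  next
    case False
    define q where "q = enn2real p"
    have pq: "p = ennreal q" using False unfolding q_def by (cases p) auto
    have q2: "q \<ge> 2" using assms(4) pq by (simp add: ennreal_le_iff[symmetric])
    then show ?thesis using False by (simp add: \<iota>_def inv_exp_def q_def[symmetric])
  qed
  define e where "e = 1 - \<iota> - 1 / \<beta> - r / real d"
  define K1 where "K1 = 1 / 2 * 6 powr (- r) * 3 powr (- (real d * (1 / \<beta> - 1 / 2)))"
  define K2 where "K2 = (1 / (2 ^ (d + 2) * real d)) ^ d / (2 * (2 * pi) ^ d)"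
  define c where "c = K1 * K2 powr \<iota> * 2 powr (real d * e)"
  have c_pos: "c > 0" unfolding c_def K1_def K2_def using d1 by simp
  show ?thesis
  proof (intro exI[of _ c] conjI allI c_pos)
    fix m :: nat
    have expo: "1 - inv_exp p - 1 / \<beta> - r / real CARD('n) = e" by (simp add: e_def \<iota>_def d_def)
    show "ennreal (c * real m powr (1 - inv_exp p - 1 / \<beta> - r / real CARD('n)))
       \<le> rho_o m (A_class r \<beta> :: (real ^ 'n \<Rightarrow> complex) set) p"
    proof (cases "m = 0")
      case True then show ?thesis by simp
    next
      case False
      then have m1: "m \<ge> 1" by simp
      define N where "N = nat \<lceil>real m powr (1 / real d)\<rceil>"
      have N1: "N \<ge> 1" and mN: "m < (N + 1) ^ d" and Nm: "real N \<le> 2 * real m powr (1 / real d)"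
        using choose_N[OF m1 d1] unfolding N_def by auto
      define \<delta> where "\<delta> = 1 / (2 ^ (d + 2) * real d * real N)"
      define P where "P = (6 * real N) powr (- r) * sqrt (real ((N + 1) ^ d)) / real ((2 * N + 1) ^ d) powr (1 / \<beta> - 1 / 2) / 2"
      have bound: "c * real m powr e \<le> P * (\<delta> ^ d / (2 * (2 * pi) ^ d)) powr \<iota>"
        using final_real[OF d1 N1 m1 Nm \<iota>0 assms(1,2,3)]
        unfolding c_def K1_def K2_def e_def \<delta>_def P_def by (simp add: mult.assoc)
      have \<delta>_pos: "\<delta> > 0" unfolding \<delta>_def using d1 N1 by simp
      have P_pos: "P > 0" unfolding P_def using N1 by simp
      show ?thesis
        unfolding rho_o_def expo
      proof (intro INF_greatest)
        fix \<xi> :: "(real^'n) list" and M :: "complex list \<Rightarrow> real^'n \<Rightarrow> complex"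
        assume \<xi>: "\<xi> \<in> {\<xi>. length \<xi> = m \<and> set \<xi> \<subseteq> torus}"
          and M: "M \<in> {M. \<forall>y. M y \<in> borel_measurable lborel}"
        have len: "length \<xi> < (N + 1) ^ CARD('n)" using \<xi> mN by (simp add: d_def)
        obtain F x0 where FA: "F \<in> A_class r \<beta>" and mFA: "(\<lambda>x. - F x) \<in> A_class r \<beta>"
          and F\<xi>: "\<forall>y\<in>set \<xi>. F y = 0" and Fm: "F \<in> borel_measurable lborel"
          and cube: "cbox x0 (\<chi> i. x0 $ i + \<delta>) \<subseteq> torus"
          and lower: "\<forall>x\<in>cbox x0 (\<chi> i. x0 $ i + \<delta>). P \<le> norm (F x)"
          using core[OF N1 len assms(1,2,3)] unfolding \<delta>_def P_def d_def by blast
        define h where "h = M (map F \<xi>)"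
        have hm: "h \<in> borel_measurable lborel" using M by (simp add: h_def)
        have mapeq: "map (\<lambda>x. - F x) \<xi> = map F \<xi>" using F\<xi> by (simp add: map_eq_conv)
        have disj: "ennreal (P * (\<delta> ^ CARD('n) / (2 * (2 * pi) ^ CARD('n))) powr inv_exp p) \<le> Lp_norm p (\<lambda>x. F x - h x)
          \<or> ennreal (P * (\<delta> ^ CARD('n) / (2 * (2 * pi) ^ CARD('n))) powr inv_exp p) \<le> Lp_norm p (\<lambda>x. - F x - h x)"
          by (rule Lp_lower[OF assms(4) Fm hm \<delta>_pos P_pos cube]) (use lower in auto)
        have cV: "ennreal (c * real m powr e) \<le> ennreal (P * (\<delta> ^ CARD('n) / (2 * (2 * pi) ^ CARD('n))) powr inv_exp p)"
          using bound by (intro ennreal_leI) (simp add: d_def \<iota>_def)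
        show "ennreal (c * real m powr e) \<le> (SUP f\<in>A_class r \<beta>. Lp_norm p (\<lambda>x. f x - M (map f \<xi>) x))"
          using disj
        proof
          assume a: "ennreal (P * (\<delta> ^ CARD('n) / (2 * (2 * pi) ^ CARD('n))) powr inv_exp p) \<le> Lp_norm p (\<lambda>x. F x - h x)"
          show ?thesis
            by (rule SUP_upper2[OF FA]) (use a cV in \<open>auto simp: h_def\<close>)
        next
          assume a: "ennreal (P * (\<delta> ^ CARD('n) / (2 * (2 * pi) ^ CARD('n))) powr inv_exp p) \<le> Lp_norm p (\<lambda>x. - F x - h x)"
          have eq: "Lp_norm p (\<lambda>x. - F x - M (map (\<lambda>x. - F x) \<xi>) x) = Lp_norm p (\<lambda>x. - F x - h x)"
            unfolding mapeq h_def ..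
          show ?thesis
            by (rule SUP_upper2[OF mFA]) (simp only: eq, rule order_trans[OF cV a])
        qed
      qed
    qed
  qed
qed

end
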